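(* Let $n\geq1$, $\delta,\alpha\geq0$, $\theta\in\left[\frac\alpha2,\alpha\right]$, $\varepsilon\in(0,1)$, $\gamma$ a multi-index, and for $j\in\{0,1\}$ $$I_0^2(j,|\gamma|)=\int_{\mathbb{R}^n}\frac{|\partial_t^j(\lambda_+e^{\lambda_-t}-\lambda_-e^{\lambda_+t})|^2}{|\lambda_+-\lambda_-|^2}|\xi|^{2|\gamma|}\chi(\xi)^2d\xi,\qquad I_1^2(j,|\gamma|)=\int_{\mathbb{R}^n}\frac{|\partial_t^j(e^{\lambda_+t}-e^{\lambda_-t})|^2}{|\lambda_+-\lambda_-|^2}|\xi|^{2|\gamma|}\chi(\xi)^2d\xi.$$ Then for all $t\geq0$, if $\theta>0$: (i) if $n+2|\gamma|>2\alpha$, $I_1(0,|\gamma|)\lesssim(1+t)^{-\frac1\theta\left(\frac n4+\frac{|\gamma|}2-\frac\alpha2\right)}$; (ii) $I_1(1,|\gamma|)\lesssim(1+t)^{-\frac1\theta\left(\frac n4+\frac{|\gamma|}2\right)}$; (iii) $I_0(0,|\gamma|)\lesssim(1+t)^{-\frac1\theta\left(\frac n4+\frac{|\gamma|}2\right)}$; (iv) $I_0(1,|\gamma|)\lesssim(1+t)^{-\frac1\theta\left(\frac n4+\frac{|\gamma|}2+\frac\alpha2\right)}$. If $\alpha=\theta=0$, then $I_i(j,|\gamma|)\lesssim e^{-\frac t4}$ for all $t\geq0$ and $i,j\in\{0,1\}$.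
   Context: $\lambda_\pm=\frac{|\xi|^{2\theta}}{2(1+|\xi|^{2\delta})}\left(-1\pm i\sqrt{4|\xi|^{2(\alpha-2\theta)}(1+|\xi|^{2\delta})-1}\right)$; $\chi$ is the characteristic function of $\{|\xi|<\varepsilon\}$; $\partial_t^j$ is the $j$-th time derivative. $\lesssim$ means $\leq C\cdot$ with $C$ independent of $t$. *)

theory Defs
  imports "HOL-Analysis.Analysis"
begin

text \<open>Real power of a nonnegative radius with the convention r^0 = 1 (also at r = 0).\<close>
definition pw :: "real \<Rightarrow> real \<Rightarrow> real" where
  "pw r a = (if a = 0 then 1 else r powr a)"

definition lam_plus :: "real \<Rightarrow> real \<Rightarrow> real \<Rightarrow> real \<Rightarrow> complex" where
  "lam_plus \<alpha> \<theta> \<delta> r =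
     complex_of_real (pw r (2*\<theta>) / (2 * (1 + pw r (2*\<delta>)))) *
     (-1 + \<i> * csqrt (complex_of_real (4 * pw r (2*(\<alpha> - 2*\<theta>)) * (1 + pw r (2*\<delta>)) - 1)))"

definition lam_minus :: "real \<Rightarrow> real \<Rightarrow> real \<Rightarrow> real \<Rightarrow> complex" where
  "lam_minus \<alpha> \<theta> \<delta> r =
     complex_of_real (pw r (2*\<theta>) / (2 * (1 + pw r (2*\<delta>)))) *
     (-1 - \<i> * csqrt (complex_of_real (4 * pw r (2*(\<alpha> - 2*\<theta>)) * (1 + pw r (2*\<delta>)) - 1)))"

definition chi :: "real \<Rightarrow> 'a::real_normed_vector \<Rightarrow> real" where
  "chi \<epsilon> \<xi> = indicator {\<xi>. norm \<xi> < \<epsilon>} \<xi>"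

definition mi_len :: "('n::finite \<Rightarrow> nat) \<Rightarrow> nat" where
  "mi_len \<gamma> = (\<Sum>i\<in>UNIV. \<gamma> i)"

text \<open>I_0^2(j,|gamma|)(t); the t-derivative is taken of the entire extension in t.\<close>
definition I0sq :: "real \<Rightarrow> real \<Rightarrow> real \<Rightarrow> real \<Rightarrow> ('n::finite \<Rightarrow> nat) \<Rightarrow> nat \<Rightarrow> real \<Rightarrow> real" where
  "I0sq \<alpha> \<theta> \<delta> \<epsilon> \<gamma> j t =
     (LINT \<xi>|(lborel :: (real^'n) measure).
        (let lp = lam_plus \<alpha> \<theta> \<delta> (norm \<xi>); lm = lam_minus \<alpha> \<theta> \<delta> (norm \<xi>) in
          (cmod ((deriv ^^ j) (\<lambda>s::complex. lp * exp (lm * s) - lm * exp (lp * s)) (complex_of_real t)))\<^sup>2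
          / (cmod (lp - lm))\<^sup>2 * norm \<xi> ^ (2 * mi_len \<gamma>) * (chi \<epsilon> \<xi>)\<^sup>2))"

definition I1sq :: "real \<Rightarrow> real \<Rightarrow> real \<Rightarrow> real \<Rightarrow> ('n::finite \<Rightarrow> nat) \<Rightarrow> nat \<Rightarrow> real \<Rightarrow> real" where
  "I1sq \<alpha> \<theta> \<delta> \<epsilon> \<gamma> j t =
     (LINT \<xi>|(lborel :: (real^'n) measure).
        (let lp = lam_plus \<alpha> \<theta> \<delta> (norm \<xi>); lm = lam_minus \<alpha> \<theta> \<delta> (norm \<xi>) in
          (cmod ((deriv ^^ j) (\<lambda>s::complex. exp (lp * s) - exp (lm * s)) (complex_of_real t)))\<^sup>2
          / (cmod (lp - lm))\<^sup>2 * norm \<xi> ^ (2 * mi_len \<gamma>) * (chi \<epsilon> \<xi>)\<^sup>2))"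

definition I0 where "I0 \<alpha> \<theta> \<delta> \<epsilon> \<gamma> j t = sqrt (I0sq \<alpha> \<theta> \<delta> \<epsilon> \<gamma> j t)"
definition I1 where "I1 \<alpha> \<theta> \<delta> \<epsilon> \<gamma> j t = sqrt (I1sq \<alpha> \<theta> \<delta> \<epsilon> \<gamma> j t)"

end

theory Submission
  imports Defs
begin


lemma nn_scale:
  fixes f :: "real^'n::finite \<Rightarrow> ennreal"
  assumes [measurable]: "f \<in> borel_measurable borel" and c: "c > 0"
  shows "(\<integral>\<^sup>+x. f x \<partial>lborel) = ennreal (c ^ CARD('n)) * (\<integral>\<^sup>+x. f (c *\<^sub>R x) \<partial>lborel)"
  apply (subst (1) lborel_affine[of c 0])
  using c by (simp_all add: nn_integral_density nn_integral_distr nn_integral_cmult)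

definition shf :: "real \<Rightarrow> real \<Rightarrow> real \<Rightarrow> real^'n::finite \<Rightarrow> ennreal" where
  "shf q a b x = ennreal (indicator {x. a \<le> norm x \<and> norm x < b} x * norm x powr q)"

lemma shf_meas[measurable]: "shf q a b \<in> borel_measurable borel"
  unfolding shf_def by measurable



lemma shf_scale:
  assumes "c > 0"
  shows "shf q (c*a) (c*b) (c *\<^sub>R x) = ennreal (c powr q) * shf q a b x"
proof -
  have "norm (c *\<^sub>R x) = c * norm x" using assms by simp
  moreover have "(c * norm x) powr q = c powr q * norm x powr q" using assms by (simp add: powr_mult)
  moreover have "(c*a \<le> c * norm x \<and> c * norm x < c*b) = (a \<le> norm x \<and> norm x < b)" using assms by simp
  ultimately show ?thesis unfolding shf_def
    by (auto simp: indicator_def ennreal_mult'[symmetric])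
qed

lemma shf_int_scale:
  assumes "c > 0"
  shows "(\<integral>\<^sup>+(x::real^'n). shf q (c*a) (c*b) x \<partial>(lborel::(real^'n::finite) measure)) =
         ennreal (c ^ CARD('n) * c powr q) * (\<integral>\<^sup>+(x::real^'n). shf q a b x \<partial>lborel)"
  apply (subst nn_scale[OF _ assms])
   apply measurable
  apply (simp only: shf_scale[OF assms])
  apply (subst nn_integral_cmult)
  using assms by (auto simp: ennreal_mult mult.assoc)

lemma shf_add_pt:
  assumes "a \<le> b" "b \<le> d"
  shows "shf q a b x + shf q b d x = shf q a d x"
proof (cases "norm x < b")
  case True
  then show ?thesis using assms by (simp add: shf_def indicator_def)
next
  case False
  then show ?thesis using assms by (simp add: shf_def indicator_def)
qed

lemma shf_add:
  assumes "a \<le> b" "b \<le> d"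
  shows "(\<integral>\<^sup>+(x::real^'n). shf q a b x \<partial>(lborel::(real^'n::finite) measure)) + (\<integral>\<^sup>+(x::real^'n). shf q b d x \<partial>lborel)
        = (\<integral>\<^sup>+(x::real^'n). shf q a d x \<partial>lborel)"
  apply (subst nn_integral_add[symmetric])
  using assms by (auto simp: shf_add_pt)

lemma shf_fin:
  assumes "0 < a"
  shows "(\<integral>\<^sup>+(x::real^'n). shf q a b x \<partial>(lborel::(real^'n::finite) measure)) < top"
proof -
  define M where "M = max (a powr q) (b powr q)"
  have "(\<integral>\<^sup>+(x::real^'n). shf q a b x \<partial>(lborel::(real^'n::finite) measure)) \<le>
        (\<integral>\<^sup>+(x::real^'n). ennreal M * indicator (ball 0 b) x \<partial>lborel)"
  proof (rule nn_integral_mono)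
    fix x :: "real^'n"
    show "shf q a b x \<le> ennreal M * indicator (ball 0 b) x"
    proof (cases "a \<le> norm x \<and> norm x < b")
      case True
      have "norm x powr q \<le> M"
      proof (cases "q \<ge> 0")
        case True
        have "norm x powr q \<le> b powr q" using True \<open>a \<le> norm x \<and> norm x < b\<close>
          by (intro powr_mono2) auto
        then show ?thesis unfolding M_def by linarith
      next
        case False
        have "norm x powr q \<le> a powr q" using False \<open>a \<le> norm x \<and> norm x < b\<close> assms
          by (intro powr_mono2') auto
        then show ?thesis unfolding M_def by linarith
      qed
      then show ?thesis using True by (simp add: shf_def indicator_def ennreal_leI)
    next
      case False
      then show ?thesis by (simp add: shf_def indicator_def)
    qed
  qed
  also have "\<dots> = ennreal M * emeasure lborel (ball (0::real^'n) b)"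
    by (simp add: nn_integral_cmult_indicator)
  also have "\<dots> < top" using emeasure_lborel_ball_finite[of "0::real^'n" b]
    by (simp add: ennreal_mult_less_top)
  finally show ?thesis .
qed



lemma iter_bound:
  fixes v :: "nat \<Rightarrow> ennreal"
  assumes "v 0 = 0" "\<And>k. v (Suc k) \<le> ennreal \<rho> * v k + ennreal m" "0 \<le> \<rho>" "\<rho> < 1" "0 \<le> m"
  shows "v k \<le> ennreal (m / (1 - \<rho>))"
proof (induction k)
  case 0 then show ?case using assms by simp
next
  case (Suc k)
  have "v (Suc k) \<le> ennreal \<rho> * ennreal (m / (1 - \<rho>)) + ennreal m"
    using assms(2)[of k] Suc by (meson add_right_mono mult_left_mono order.trans zero_le)
  also have "\<dots> = ennreal (\<rho> * (m / (1 - \<rho>)) + m)"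
  proof -
    have X0: "0 \<le> m / (1 - \<rho>)" using assms by simp
    have "ennreal \<rho> * ennreal (m / (1 - \<rho>)) = ennreal (\<rho> * (m / (1 - \<rho>)))"
      using assms(3) X0 by (rule ennreal_mult[symmetric])
    then show ?thesis using X0 assms by (simp add: ennreal_plus)
  qed
  also have "\<rho> * (m / (1 - \<rho>)) + m = m / (1 - \<rho>)"
    using assms by (simp add: field_simps)
  finally show ?case .
qed

lemma shf_empty: "shf q a a x = 0"
  by (simp add: shf_def indicator_def)

lemma shf_zero_bound:
  assumes "q > - real CARD('n::finite)"
  shows "\<exists>B\<ge>0. (\<integral>\<^sup>+(x::real^'n). shf q 0 1 x \<partial>lborel) \<le> ennreal B"
proof -
  define h :: real where "h = 1/2"
  define \<rho> where "\<rho> = h ^ CARD('n) * h powr q"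
  have hpos: "0 < h" "h < 1" by (auto simp: h_def)
  have \<rho>eq: "\<rho> = h powr (real CARD('n) + q)"
    unfolding \<rho>_def using hpos by (simp add: powr_add powr_realpow)
  have \<rho>1: "\<rho> < 1" unfolding \<rho>eq using powr_less_mono'[OF hpos, of 0 "real CARD('n) + q"] assms hpos by simp
  have \<rho>0: "0 \<le> \<rho>" unfolding \<rho>eq by (rule powr_ge_zero)
  define I where "I = (\<integral>\<^sup>+(x::real^'n). shf q h 1 x \<partial>lborel)"
  define m where "m = enn2real I"
  have Itop: "I < top" unfolding I_def by (rule shf_fin) (simp add: hpos)
  have Im: "I = ennreal m" unfolding m_def using Itop by simp
  define v where "v k = (\<integral>\<^sup>+(x::real^'n). shf q (h^k) 1 x \<partial>lborel)" for k
  have vb: "v k \<le> ennreal (m / (1 - \<rho>))" for k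
  proof (rule iter_bound[of v])
    show "v 0 = 0" by (simp add: v_def shf_empty)
    show "0 \<le> m" by (simp add: m_def)
    show "0 \<le> \<rho>" "\<rho> < 1" by fact+
    fix k
    have hk: "h^(Suc k) \<le> h" "h \<le> 1" using hpos by (auto simp: power_le_one)
    have "v (Suc k) = (\<integral>\<^sup>+(x::real^'n). shf q (h*h^k) (h*1) x \<partial>lborel) + I"
      unfolding v_def I_def using shf_add[OF hk, of q, where 'n='n] by simp
    also have "\<dots> = ennreal \<rho> * v k + ennreal m"
      unfolding v_def \<rho>_def Im using shf_int_scale[OF hpos(1), of q "h^k" 1, where 'n='n] by simp
    finally show "v (Suc k) \<le> ennreal \<rho> * v k + ennreal m" by simp
  qed
  have "(\<integral>\<^sup>+(x::real^'n). shf q 0 1 x \<partial>lborel) \<le> (\<integral>\<^sup>+(x::real^'n). (SUP k. shf q (h^k) 1 x) \<partial>lborel)"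
  proof (rule nn_integral_mono)
    fix x :: "real^'n"
    show "shf q 0 1 x \<le> (SUP k. shf q (h^k) 1 x)"
    proof (cases "x = 0")
      case True then show ?thesis by (simp add: shf_def)
    next
      case False
      then have "norm x > 0" by simp
      then obtain k where "h^k < norm x" using real_arch_pow_inv[OF _ hpos(2)] by blast
      then have "shf q 0 1 x = shf q (h^k) 1 x" by (simp add: shf_def indicator_def)
      then show ?thesis by (metis SUP_upper UNIV_I)
    qed
  qed
  also have "\<dots> = (SUP k. v k)"
    unfolding v_def
  proof (rule nn_integral_monotone_convergence_SUP)
    show "incseq (\<lambda>k. shf q (h^k) 1)"
    proof (rule incseq_SucI, rule le_funI)
      fix k x
      have "h^(Suc k) \<le> h^k" using hpos by (simp add: power_decreasing)
      then show "shf q (h^k) 1 x \<le> shf q (h^(Suc k)) 1 x"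
        by (auto simp: shf_def indicator_def)
    qed
  qed measurable
  also have "\<dots> \<le> ennreal (m / (1 - \<rho>))" using vb by (simp add: SUP_least)
  finally show ?thesis using \<rho>1 by (intro exI[of _ "m / (1 - \<rho>)"]) (simp add: m_def)
qed

definition tlf :: "real \<Rightarrow> real^'n::finite \<Rightarrow> ennreal" where
  "tlf q x = ennreal (indicator {x. 1 \<le> norm x} x * norm x powr q)"

lemma tlf_meas[measurable]: "tlf q \<in> borel_measurable borel"
  unfolding tlf_def by measurable

lemma shf_tail_bound:
  assumes "q < - real CARD('n::finite)"
  shows "\<exists>B\<ge>0. (\<integral>\<^sup>+(x::real^'n). tlf q x \<partial>lborel) \<le> ennreal B"
proof -
  define h :: real where "h = 2"
  define \<rho> where "\<rho> = h ^ CARD('n) * h powr q"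
  have hpos: "0 < h" "1 < h" by (auto simp: h_def)
  have \<rho>eq: "\<rho> = h powr (real CARD('n) + q)"
    unfolding \<rho>_def using hpos by (simp add: powr_add powr_realpow)
  have \<rho>1: "\<rho> < 1" unfolding \<rho>eq using powr_less_one[OF hpos(2)] assms by simp
  have \<rho>0: "0 \<le> \<rho>" unfolding \<rho>eq by (rule powr_ge_zero)
  define I where "I = (\<integral>\<^sup>+(x::real^'n). shf q 1 h x \<partial>lborel)"
  define m where "m = enn2real I"
  have Itop: "I < top" unfolding I_def by (rule shf_fin) simp
  have Im: "I = ennreal m" unfolding m_def using Itop by simp
  define v where "v k = (\<integral>\<^sup>+(x::real^'n). shf q 1 (h^k) x \<partial>lborel)" for k
  have vb: "v k \<le> ennreal (m / (1 - \<rho>))" for k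
  proof (rule iter_bound[of v])
    show "v 0 = 0" by (simp add: v_def shf_empty)
    show "0 \<le> m" by (simp add: m_def)
    show "0 \<le> \<rho>" "\<rho> < 1" by fact+
    fix k
    have hk: "1 \<le> h" "h \<le> h^(Suc k)" using hpos by (auto simp: one_le_power)
    have "v (Suc k) = I + (\<integral>\<^sup>+(x::real^'n). shf q (h*1) (h*h^k) x \<partial>lborel)"
      unfolding v_def I_def using shf_add[OF hk, of q, where 'n='n] by simp
    also have "\<dots> = ennreal \<rho> * v k + ennreal m"
      unfolding v_def \<rho>_def Im using shf_int_scale[OF hpos(1), of q 1 "h^k", where 'n='n] by (simp add: add.commute)
    finally show "v (Suc k) \<le> ennreal \<rho> * v k + ennreal m" by simp
  qed
  have "(\<integral>\<^sup>+(x::real^'n). tlf q x \<partial>lborel) \<le> (\<integral>\<^sup>+(x::real^'n). (SUP k. shf q 1 (h^k) x) \<partial>lborel)"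
  proof (rule nn_integral_mono)
    fix x :: "real^'n"
    obtain k where "norm x < h^k" using real_arch_pow[OF hpos(2)] by blast
    then have "tlf q x = shf q 1 (h^k) x" by (simp add: shf_def tlf_def indicator_def)
    then show "tlf q x \<le> (SUP k. shf q 1 (h^k) x)" by (metis SUP_upper UNIV_I)
  qed
  also have "\<dots> = (SUP k. v k)"
    unfolding v_def
  proof (rule nn_integral_monotone_convergence_SUP)
    show "incseq (\<lambda>k. shf q 1 (h^k))"
    proof (rule incseq_SucI, rule le_funI)
      fix k x
      have "h^k \<le> h^(Suc k)" using hpos by simp
      then show "shf q 1 (h^k) x \<le> shf q 1 (h^(Suc k)) x"
        by (auto simp: shf_def indicator_def)
    qed
  qed measurable
  also have "\<dots> \<le> ennreal (m / (1 - \<rho>))" using vb by (simp add: SUP_least)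
  finally show ?thesis using \<rho>1 by (intro exI[of _ "m / (1 - \<rho>)"]) (simp add: m_def)
qed



lemma exp_pow_bound:
  fixes m u :: real
  assumes "m > 0" "u > 0"
  shows "u powr m * exp (-u) \<le> exp (m * ln m - m)"
proof -
  have "ln (u/m) \<le> u/m - 1" using assms by (intro ln_le_minus_one) simp
  then have "m * ln (u/m) \<le> m * (u/m - 1)" using assms by (intro mult_left_mono) auto
  moreover have "m * ln (u/m) = m * ln u - m * ln m" using assms by (simp add: ln_div right_diff_distrib)
  moreover have "m * (u/m - 1) = u - m" using assms by (simp add: field_simps)
  ultimately have "m * ln u - u \<le> m * ln m - m" by linarith
  moreover have "u powr m * exp (-u) = exp (m * ln u - u)"
    using assms by (simp add: powr_def exp_diff exp_minus field_simps)
  ultimately show ?thesis by simp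
qed

lemma exp_neg_bound:
  fixes m u :: real
  assumes "m > 0" "u > 0"
  shows "exp (-u) \<le> exp (m * ln m - m) * u powr (-m)"
proof -
  have "u powr m * exp (-u) \<le> exp (m * ln m - m)" by (rule exp_pow_bound[OF assms])
  moreover have "u powr m > 0" using assms by simp
  ultimately have "exp (-u) \<le> exp (m * ln m - m) / u powr m" by (simp add: field_simps)
  then show ?thesis using assms by (simp add: powr_minus_divide)
qed

lemma tail_pt:
  fixes r c \<theta> p n :: real
  assumes "r > 0" "c > 0" "\<theta> > 0" "n + 1 + p > 0"
  shows "r powr p * exp (- c * r powr (2*\<theta>)) \<le>
         (exp (((n+1+p)/(2*\<theta>)) * ln ((n+1+p)/(2*\<theta>)) - (n+1+p)/(2*\<theta>)) * c powr (-((n+1+p)/(2*\<theta>)))) * r powr (-n-1)"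
proof -
  define m where "m = (n+1+p)/(2*\<theta>)"
  define E where "E = exp (m * ln m - m)"
  have m0: "m > 0" unfolding m_def using assms by simp
  have u0: "c * r powr (2*\<theta>) > 0" using assms by simp
  have "exp (- (c * r powr (2*\<theta>))) \<le> E * (c * r powr (2*\<theta>)) powr (-m)"
    unfolding E_def by (rule exp_neg_bound[OF m0 u0])
  also have "(c * r powr (2*\<theta>)) powr (-m) = c powr (-m) * r powr (-(n+1+p))"
    using assms by (simp add: powr_mult powr_powr m_def)
  finally have "exp (- c * r powr (2*\<theta>)) \<le> E * (c powr (-m) * r powr (-(n+1+p)))" by simp
  then have "r powr p * exp (- c * r powr (2*\<theta>)) \<le> r powr p * (E * (c powr (-m) * r powr (-(n+1+p))))"
    by (intro mult_left_mono) auto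
  also have "\<dots> = E * c powr (-m) * (r powr p * r powr (-(n+1+p)))" by simp
  also have "r powr p * r powr (-(n+1+p)) = r powr (-n-1)" by (simp add: powr_add[symmetric])
  finally show ?thesis unfolding E_def m_def by simp
qed

definition gf :: "real \<Rightarrow> real \<Rightarrow> real \<Rightarrow> real^'n::finite \<Rightarrow> ennreal" where
  "gf p c \<theta> y = ennreal (norm y powr p * exp (- c * norm y powr (2*\<theta>)))"

lemma gf_meas[measurable]: "gf p c \<theta> \<in> borel_measurable borel"
  unfolding gf_def by measurable

lemma K_fin:
  assumes "p > - real CARD('n::finite)" "c > 0" "\<theta> > 0"
  shows "\<exists>K\<ge>0. (\<integral>\<^sup>+(y::real^'n). gf p c \<theta> y \<partial>lborel) \<le> ennreal K"
proof -
  define n where "n = real CARD('n)"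
  obtain B1 where B1: "B1 \<ge> 0" "(\<integral>\<^sup>+(x::real^'n). shf p 0 1 x \<partial>lborel) \<le> ennreal B1"
    using shf_zero_bound[OF assms(1)] by blast
  have "-n-1 < - real CARD('n)" unfolding n_def by simp
  then obtain B2 where B2: "B2 \<ge> 0" "(\<integral>\<^sup>+(x::real^'n). tlf (-n-1) x \<partial>lborel) \<le> ennreal B2"
    using shf_tail_bound by blast
  define Cc where "Cc = exp (((n+1+p)/(2*\<theta>)) * ln ((n+1+p)/(2*\<theta>)) - (n+1+p)/(2*\<theta>)) * c powr (-((n+1+p)/(2*\<theta>)))"
  have Cc0: "Cc \<ge> 0" unfolding Cc_def by simp
  have np: "n + 1 + p > 0" using assms(1) unfolding n_def by simp
  have "(\<integral>\<^sup>+(y::real^'n). gf p c \<theta> y \<partial>lborel) \<le>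
        (\<integral>\<^sup>+(y::real^'n). shf p 0 1 y + ennreal Cc * tlf (-n-1) y \<partial>lborel)"
  proof (rule nn_integral_mono)
    fix y :: "real^'n"
    show "gf p c \<theta> y \<le> shf p 0 1 y + ennreal Cc * tlf (-n-1) y"
    proof (cases "norm y < 1")
      case True
      have "norm y powr p * exp (- c * norm y powr (2*\<theta>)) \<le> norm y powr p * 1"
        using assms by (intro mult_left_mono) auto
      then have "gf p c \<theta> y \<le> shf p 0 1 y" using True
        by (simp add: gf_def shf_def indicator_def ennreal_leI)
      then show ?thesis by (simp add: add_increasing2)
    next
      case False
      then have r0: "norm y > 0" by (metis norm_zero zero_less_norm_iff zero_less_one)
      have "norm y powr p * exp (- c * norm y powr (2*\<theta>)) \<le> Cc * norm y powr (-n-1)"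
        unfolding Cc_def by (rule tail_pt[OF r0 assms(2,3) np])
      then have "gf p c \<theta> y \<le> ennreal Cc * tlf (-n-1) y" using False Cc0
        by (simp add: gf_def tlf_def indicator_def ennreal_mult[symmetric] ennreal_leI)
      then show ?thesis by (simp add: add_increasing)
    qed
  qed
  also have "\<dots> = (\<integral>\<^sup>+(y::real^'n). shf p 0 1 y \<partial>lborel) + ennreal Cc * (\<integral>\<^sup>+(y::real^'n). tlf (-n-1) y \<partial>lborel)"
    by (subst nn_integral_add) (auto simp: nn_integral_cmult)
  also have "\<dots> \<le> ennreal B1 + ennreal Cc * ennreal B2"
    using B1 B2 by (intro add_mono mult_left_mono) auto
  also have "\<dots> = ennreal (B1 + Cc * B2)" using B1 B2 Cc0 by (simp add: ennreal_mult ennreal_plus)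
  finally show ?thesis using B1 B2 Cc0 by (intro exI[of _ "B1 + Cc * B2"]) auto
qed



lemma decay:
  assumes "p > - real CARD('n::finite)" "c > 0" "\<theta> > 0" "\<epsilon> \<le> 1"
  shows "\<exists>K\<ge>0. \<forall>t\<ge>0. (\<integral>\<^sup>+(x::real^'n). ennreal (indicator {x. norm x < \<epsilon>} x * (norm x powr p * exp (- c * norm x powr (2*\<theta>) * t))) \<partial>lborel)
            \<le> ennreal (K * (1+t) powr (-(real CARD('n) + p)/(2*\<theta>)))"
proof -
  define n where "n = real CARD('n)"
  obtain K0 where K0: "K0 \<ge> 0" "(\<integral>\<^sup>+(y::real^'n). gf p c \<theta> y \<partial>lborel) \<le> ennreal K0"
    using K_fin[OF assms(1-3)] by blast
  have "\<forall>t\<ge>0. (\<integral>\<^sup>+(x::real^'n). ennreal (indicator {x. norm x < \<epsilon>} x * (norm x powr p * exp (- c * norm x powr (2*\<theta>) * t))) \<partial>lborel)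
            \<le> ennreal ((exp c * K0) * (1+t) powr (-(n + p)/(2*\<theta>)))"
  proof (intro allI impI)
    fix t :: real assume t0: "t \<ge> 0"
    define s where "s = (1+t) powr (1/(2*\<theta>))"
    have s0: "s > 0" unfolding s_def using t0 by simp
    have s2: "s powr (2*\<theta>) = 1+t" unfolding s_def using t0 assms(3) by (simp add: powr_powr)
    have "(\<integral>\<^sup>+(x::real^'n). ennreal (indicator {x. norm x < \<epsilon>} x * (norm x powr p * exp (- c * norm x powr (2*\<theta>) * t))) \<partial>lborel)
          \<le> (\<integral>\<^sup>+(x::real^'n). ennreal (exp c * s powr (-p)) * gf p c \<theta> (s *\<^sub>R x) \<partial>lborel)"
    proof (rule nn_integral_mono)
      fix x :: "real^'n"
      show "ennreal (indicator {x. norm x < \<epsilon>} x * (norm x powr p * exp (- c * norm x powr (2*\<theta>) * t)))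
            \<le> ennreal (exp c * s powr (-p)) * gf p c \<theta> (s *\<^sub>R x)"
      proof (cases "norm x < \<epsilon>")
        case False then show ?thesis by simp
      next
        case True
        define r where "r = norm x"
        have r0: "r \<ge> 0" unfolding r_def by simp
        have r1: "r powr (2*\<theta>) \<le> 1" using True assms(3,4) r0 unfolding r_def by (intro powr_le1) auto
        have ns: "norm (s *\<^sub>R x) = s * r" unfolding r_def using s0 by simp
        have sp: "(s * r) powr p = s powr p * r powr p" using s0 r0 by (simp add: powr_mult)
        have sq: "(s * r) powr (2*\<theta>) = (1+t) * r powr (2*\<theta>)" using s0 r0 s2 by (simp add: powr_mult)
        have ss: "s powr (-p) * s powr p = 1" using s0 by (simp add: powr_add[symmetric])
        have e1: "exp (- c * r powr (2*\<theta>) * t) = exp (c * r powr (2*\<theta>)) * exp (- c * ((1+t) * r powr (2*\<theta>)))"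
          by (simp add: exp_add[symmetric] algebra_simps)
        have e2: "exp (c * r powr (2*\<theta>)) \<le> exp c" using r1 assms(2) by simp
        have "r powr p * exp (- c * r powr (2*\<theta>) * t) \<le> r powr p * (exp c * exp (- c * ((1+t) * r powr (2*\<theta>))))"
          unfolding e1 by (intro mult_left_mono mult_right_mono e2) auto
        also have "\<dots> = (exp c * s powr (-p)) * ((s * r) powr p * exp (- c * (s * r) powr (2*\<theta>)))"
          unfolding sp sq using ss by (simp add: algebra_simps)
        finally have "r powr p * exp (- c * r powr (2*\<theta>) * t) \<le> (exp c * s powr (-p)) * (norm (s *\<^sub>R x) powr p * exp (- c * norm (s *\<^sub>R x) powr (2*\<theta>)))"
          unfolding ns .
        then show ?thesis using True unfolding gf_def r_def
          by (simp add: ennreal_mult[symmetric] ennreal_leI)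
      qed
    qed
    also have "\<dots> = ennreal (exp c * s powr (-p)) * (\<integral>\<^sup>+(x::real^'n). gf p c \<theta> (s *\<^sub>R x) \<partial>lborel)"
      by (rule nn_integral_cmult) measurable
    also have "(\<integral>\<^sup>+(x::real^'n). gf p c \<theta> (s *\<^sub>R x) \<partial>lborel) = ennreal ((1/s) ^ CARD('n)) * (\<integral>\<^sup>+(x::real^'n). gf p c \<theta> x \<partial>lborel)"
    proof -
      have "(\<integral>\<^sup>+(x::real^'n). gf p c \<theta> (s *\<^sub>R x) \<partial>lborel) = ennreal ((1/s) ^ CARD('n)) * (\<integral>\<^sup>+(x::real^'n). gf p c \<theta> (s *\<^sub>R ((1/s) *\<^sub>R x)) \<partial>lborel)"
        by (rule nn_scale) (use s0 in auto)
      then show ?thesis using s0 by simp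
    qed
    also have "ennreal (exp c * s powr (-p)) * (ennreal ((1/s) ^ CARD('n)) * (\<integral>\<^sup>+(x::real^'n). gf p c \<theta> x \<partial>lborel))
        \<le> ennreal (exp c * s powr (-p)) * (ennreal ((1/s) ^ CARD('n)) * ennreal K0)"
      using K0 by (intro mult_left_mono) auto
    also have "\<dots> = ennreal (exp c * K0 * (s powr (-p) * (1/s) ^ CARD('n)))"
      using K0 s0 by (simp add: ennreal_mult[symmetric] mult_ac)
    also have "s powr (-p) * (1/s) ^ CARD('n) = (1+t) powr (-(n + p)/(2*\<theta>))"
    proof -
      have "(1/s) ^ CARD('n) = s powr (-n)" unfolding n_def using s0
        by (simp add: powr_minus_divide powr_realpow power_one_over)
      then have "s powr (-p) * (1/s) ^ CARD('n) = s powr (-(n+p))" by (simp add: powr_add[symmetric] add.commute)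
      also have "\<dots> = (1+t) powr (-(n + p)/(2*\<theta>))" unfolding s_def using t0 by (simp add: powr_powr)
      finally show ?thesis .
    qed
    finally show "(\<integral>\<^sup>+(x::real^'n). ennreal (indicator {x. norm x < \<epsilon>} x * (norm x powr p * exp (- c * norm x powr (2*\<theta>) * t))) \<partial>lborel)
            \<le> ennreal ((exp c * K0) * (1+t) powr (-(n + p)/(2*\<theta>)))" by (simp add: mult_ac)
  qed
  then show ?thesis using K0 unfolding n_def by (intro exI[of _ "exp c * K0"]) auto
qed



lemma sq_div_bound:
  fixes u v :: complex
  assumes "cmod u \<le> M" "cmod v \<le> M" "D > 0"
  shows "(cmod (u - v))^2 / D \<le> 4 * M^2 / D"
proof -
  have "cmod (u - v) \<le> 2 * M" using norm_triangle_ineq4[of u v] assms by simp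
  then have "(cmod (u - v))^2 \<le> (2*M)^2" by (intro power_mono) auto
  then show ?thesis using assms by (simp add: divide_right_mono power_mult_distrib)
qed

lemma core:
  fixes a X t :: real
  assumes a0: "a > 0" and X3: "X \<ge> 3"
  defines "lp \<equiv> complex_of_real a * (-1 + \<i> * complex_of_real (sqrt X))"
      and "lm \<equiv> complex_of_real a * (-1 - \<i> * complex_of_real (sqrt X))"
  shows "(cmod (exp (lp * t) - exp (lm * t)))^2 / (cmod (lp - lm))^2 \<le> exp (-2*a*t) / (a^2 * X)"
    and "(cmod (lp * exp (lp * t) - lm * exp (lm * t)))^2 / (cmod (lp - lm))^2 \<le> 4/3 * exp (-2*a*t)"
    and "(cmod (lp * exp (lm * t) - lm * exp (lp * t)))^2 / (cmod (lp - lm))^2 \<le> 4/3 * exp (-2*a*t)"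
    and "(cmod (lp * (lm * exp (lm * t)) - lm * (lp * exp (lp * t))))^2 / (cmod (lp - lm))^2
           \<le> 4/3 * (a^2 * (1 + X)) * exp (-2*a*t)"
proof -
  define s where "s = sqrt X"
  have s2: "s^2 = X" unfolding s_def using X3 by simp
  have lpR: "Re lp = -a" "Im lp = a * s" unfolding lp_def s_def by simp_all
  have lmR: "Re lm = -a" "Im lm = -(a * s)" unfolding lm_def s_def by simp_all
  have D: "(cmod (lp - lm))^2 = 4*a^2*X" using s2 lpR lmR X3 by (simp add: norm_complex_def power_mult_distrib)
  have Dpos: "4*a^2*X > 0" using a0 X3 by simp
  define E where "E = exp (-a*t)"
  have E0: "E \<ge> 0" unfolding E_def by simp
  have E2: "E^2 = exp (-2*a*t)" unfolding E_def by (simp add: power2_eq_square exp_add[symmetric])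
  have elp: "cmod (exp (lp * t)) = E" unfolding E_def using lpR by simp
  have elm: "cmod (exp (lm * t)) = E" unfolding E_def using lmR by simp
  have nlp: "cmod lp = a * sqrt (1 + X)"
  proof -
    have "cmod lp = sqrt (a^2 + a^2 * s^2)" using lpR by (simp add: norm_complex_def power_mult_distrib)
    also have "a^2 + a^2 * s^2 = a^2 * (1 + X)" using s2 by (simp add: algebra_simps)
    finally show ?thesis using a0 by (simp add: real_sqrt_mult)
  qed
  have nlm: "cmod lm = a * sqrt (1 + X)"
  proof -
    have "cmod lm = sqrt (a^2 + a^2 * s^2)" using lmR by (simp add: norm_complex_def power_mult_distrib)
    also have "a^2 + a^2 * s^2 = a^2 * (1 + X)" using s2 by (simp add: algebra_simps)
    finally show ?thesis using a0 by (simp add: real_sqrt_mult)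
  qed
  have L: "(a * sqrt (1 + X))^2 = a^2 * (1 + X)" using X3 by (simp add: power_mult_distrib)
  have r43: "(1 + X) / X \<le> 4/3" using X3 by (simp add: field_simps)
  show "(cmod (exp (lp * t) - exp (lm * t)))^2 / (cmod (lp - lm))^2 \<le> exp (-2*a*t) / (a^2 * X)"
  proof -
    have "(cmod (exp (lp * t) - exp (lm * t)))^2 / (cmod (lp - lm))^2 \<le> 4 * E^2 / (4*a^2*X)"
      unfolding D by (rule sq_div_bound) (use elp elm Dpos in auto)
    then show ?thesis unfolding E2 by simp
  qed
  show "(cmod (lp * exp (lp * t) - lm * exp (lm * t)))^2 / (cmod (lp - lm))^2 \<le> 4/3 * exp (-2*a*t)"
  proof -
    have "(cmod (lp * exp (lp * t) - lm * exp (lm * t)))^2 / (cmod (lp - lm))^2 \<le> 4 * (a * sqrt (1 + X) * E)^2 / (4*a^2*X)"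
      unfolding D by (rule sq_div_bound) (use elp elm nlp nlm Dpos in \<open>auto simp: norm_mult\<close>)
    also have "\<dots> = (1 + X) / X * E^2" using a0 X3 by (simp add: power_mult_distrib field_simps)
    also have "\<dots> \<le> 4/3 * E^2" using r43 by (intro mult_right_mono) auto
    finally show ?thesis unfolding E2 .
  qed
  show "(cmod (lp * exp (lm * t) - lm * exp (lp * t)))^2 / (cmod (lp - lm))^2 \<le> 4/3 * exp (-2*a*t)"
  proof -
    have "(cmod (lp * exp (lm * t) - lm * exp (lp * t)))^2 / (cmod (lp - lm))^2 \<le> 4 * (a * sqrt (1 + X) * E)^2 / (4*a^2*X)"
      unfolding D by (rule sq_div_bound) (use elp elm nlp nlm Dpos in \<open>auto simp: norm_mult\<close>)
    also have "\<dots> = (1 + X) / X * E^2" using a0 X3 by (simp add: power_mult_distrib field_simps)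
    also have "\<dots> \<le> 4/3 * E^2" using r43 by (intro mult_right_mono) auto
    finally show ?thesis unfolding E2 .
  qed
  show "(cmod (lp * (lm * exp (lm * t)) - lm * (lp * exp (lp * t))))^2 / (cmod (lp - lm))^2
           \<le> 4/3 * (a^2 * (1 + X)) * exp (-2*a*t)"
  proof -
    have "(cmod (lp * (lm * exp (lm * t)) - lm * (lp * exp (lp * t))))^2 / (cmod (lp - lm))^2
          \<le> 4 * (a * sqrt (1 + X) * (a * sqrt (1 + X)) * E)^2 / (4*a^2*X)"
      unfolding D by (rule sq_div_bound) (use elp elm nlp nlm Dpos in \<open>auto simp: norm_mult\<close>)
    also have "a * sqrt (1 + X) * (a * sqrt (1 + X)) = a^2 * (1 + X)" using X3 by (simp add: power2_eq_square)
    also have "4 * (a^2 * (1 + X) * E)^2 / (4*a^2*X) = (1 + X) / X * (a^2 * (1 + X)) * E^2" using a0 X3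
      by (simp add: power2_eq_square field_simps)
    also have "\<dots> \<le> 4/3 * (a^2 * (1 + X)) * E^2" using r43 E0 a0 X3 by (intro mult_right_mono) auto
    finally show ?thesis unfolding E2 .
  qed
qed



lemma master:
  fixes F :: "real \<Rightarrow> real^'n::finite \<Rightarrow> real"
  assumes "p > - real CARD('n)" "\<theta> > 0" "\<epsilon> \<le> 1"
  and bnd: "\<And>t \<xi>. t \<ge> 0 \<Longrightarrow> F t \<xi> \<le> 3 * (indicator {x. norm x < \<epsilon>} \<xi> * (norm \<xi> powr p * exp (- (1/2) * norm \<xi> powr (2*\<theta>) * t)))"
  shows "\<exists>C. \<forall>t\<ge>0. sqrt (LINT \<xi>|lborel. F t \<xi>) \<le> C * (1+t) powr (-(1/\<theta>)*((real CARD('n) + p)/4))"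
proof -
  obtain K where K: "K \<ge> 0" "\<forall>t\<ge>0. (\<integral>\<^sup>+(x::real^'n). ennreal (indicator {x. norm x < \<epsilon>} x * (norm x powr p * exp (- (1/2) * norm x powr (2*\<theta>) * t))) \<partial>lborel)
            \<le> ennreal (K * (1+t) powr (-(real CARD('n) + p)/(2*\<theta>)))"
    using decay[OF assms(1) _ assms(2,3), of "1/2"] by auto
  show ?thesis
  proof (intro exI[of _ "sqrt (3*K)"] allI impI)
    fix t :: real assume t0: "t \<ge> 0"
    define e where "e = -(real CARD('n) + p)/(2*\<theta>)"
    have "(\<integral>\<^sup>+(x::real^'n). ennreal (F t x) \<partial>lborel) \<le>
          (\<integral>\<^sup>+(x::real^'n). ennreal 3 * ennreal (indicator {x. norm x < \<epsilon>} x * (norm x powr p * exp (- (1/2) * norm x powr (2*\<theta>) * t))) \<partial>lborel)"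
    proof (rule nn_integral_mono)
      fix x :: "real^'n"
      show "ennreal (F t x) \<le> ennreal 3 * ennreal (indicator {x. norm x < \<epsilon>} x * (norm x powr p * exp (- (1/2) * norm x powr (2*\<theta>) * t)))"
      proof -
        define Y where "Y = indicator {x. norm x < \<epsilon>} x * (norm x powr p * exp (- (1/2) * norm x powr (2*\<theta>) * t))"
        have Y0: "0 \<le> Y" unfolding Y_def by simp
        have "ennreal 3 * ennreal Y = ennreal (3 * Y)" using Y0 by (simp add: ennreal_mult)
        moreover have "ennreal (F t x) \<le> ennreal (3 * Y)" using bnd[OF t0, of x] unfolding Y_def by (rule ennreal_leI)
        ultimately show ?thesis unfolding Y_def by simp
      qed
    qed
    also have "\<dots> = ennreal 3 * (\<integral>\<^sup>+(x::real^'n). ennreal (indicator {x. norm x < \<epsilon>} x * (norm x powr p * exp (- (1/2) * norm x powr (2*\<theta>) * t))) \<partial>lborel)"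
      by (rule nn_integral_cmult) measurable
    also have "\<dots> \<le> ennreal 3 * ennreal (K * (1+t) powr e)"
      using K(2) t0 unfolding e_def by (intro mult_left_mono) auto
    also have "\<dots> = ennreal (3 * K * (1+t) powr e)"
    proof -
      have "ennreal (3 * (K * (1+t) powr e)) = ennreal 3 * ennreal (K * (1+t) powr e)"
        by (rule ennreal_mult) (use K(1) in auto)
      then show ?thesis by (simp add: mult.assoc)
    qed
    finally have "(LINT \<xi>|lborel. F t \<xi>) \<le> 3 * K * (1+t) powr e"
      by (intro integral_real_bounded) (use K(1) in auto)
    then have "sqrt (LINT \<xi>|lborel. F t \<xi>) \<le> sqrt (3 * K * (1+t) powr e)" by simp
    also have "\<dots> = sqrt (3*K) * sqrt ((1+t) powr e)" by (simp add: real_sqrt_mult)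
    also have "sqrt ((1+t) powr e) = (1+t) powr (e/2)" using t0 by (simp add: powr_half_sqrt_powr)
    also have "e/2 = -(1/\<theta>)*((real CARD('n) + p)/4)" unfolding e_def using assms(2) by (simp add: field_simps)
    finally show "sqrt (LINT \<xi>|lborel. F t \<xi>) \<le> sqrt (3*K) * (1+t) powr (-(1/\<theta>)*((real CARD('n) + p)/4))" .
  qed
qed

lemma deriv1_I1: "(deriv ^^ 1) (\<lambda>s::complex. exp (lp * s) - exp (lm * s)) z = lp * exp (lp * z) - lm * exp (lm * z)"
  by (simp, rule DERIV_imp_deriv) (auto intro!: derivative_eq_intros)

lemma deriv1_I0: "(deriv ^^ 1) (\<lambda>s::complex. lp * exp (lm * s) - lm * exp (lp * s)) z = lp * (lm * exp (lm * z)) - lm * (lp * exp (lp * z))"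
  by (simp, rule DERIV_imp_deriv) (auto intro!: derivative_eq_intros)

lemma pw_w: assumes "0 \<le> r" "r < 1" "\<delta> \<ge> 0" shows "0 \<le> pw r (2*\<delta>)" "pw r (2*\<delta>) \<le> 1"
  using assms by (auto simp: pw_def intro: powr_le1)

lemma pw_P: assumes "0 < r" "r < 1" "e \<le> 0" shows "pw r e \<ge> 1"
proof (cases "e = 0")
  case False
  have "1 powr e \<le> r powr e" using assms by (intro powr_mono2') auto
  then show ?thesis using False by (simp add: pw_def)
qed (simp add: pw_def)

lemma pw_pos: "0 < r \<Longrightarrow> pw r e = r powr e"
  by (simp add: pw_def)

lemma lam_forms:
  assumes "X = 4 * pw r (2*(\<alpha> - 2*\<theta>)) * (1 + pw r (2*\<delta>)) - 1" "X \<ge> 0"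
    and "a = pw r (2*\<theta>) / (2 * (1 + pw r (2*\<delta>)))"
  shows "lam_plus \<alpha> \<theta> \<delta> r = complex_of_real a * (-1 + \<i> * complex_of_real (sqrt X))"
    and "lam_minus \<alpha> \<theta> \<delta> r = complex_of_real a * (-1 - \<i> * complex_of_real (sqrt X))"
  using assms by (simp_all add: lam_plus_def lam_minus_def csqrt_of_real)



lemma finish:
  fixes Q c0 r k E2 Eb :: real
  assumes "Q \<le> c0 * (r powr k * E2)" "0 \<le> c0" "c0 \<le> 3" "0 \<le> E2" "E2 \<le> Eb" "r > 0"
  shows "Q * r^(2*m) \<le> 3 * (r powr (2 * real m + k) * Eb)"
proof -
  have rp: "r^(2*m) = r powr (2 * real m)" using powr_realpow[OF assms(6), of "2*m"] by simp
  have "Q * r^(2*m) \<le> c0 * (r powr k * E2) * r^(2*m)" using assms(1) by (intro mult_right_mono) auto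
  also have "\<dots> \<le> 3 * (r powr k * Eb) * r^(2*m)"
    using assms by (intro mult_right_mono mult_mono) auto
  also have "\<dots> = 3 * (r powr (2 * real m + k) * Eb)" unfolding rp by (simp add: powr_add)
  finally show ?thesis .
qed

lemma pt_pos:
  fixes \<xi> :: "'a::real_normed_vector"
  assumes "\<delta> \<ge> 0" "\<alpha> \<ge> 0" "\<alpha> / 2 \<le> \<theta>" "\<theta> \<le> \<alpha>" "\<theta> > 0" "\<epsilon> < 1" "t \<ge> 0"
  defines "lp \<equiv> lam_plus \<alpha> \<theta> \<delta> (norm \<xi>)" and "lm \<equiv> lam_minus \<alpha> \<theta> \<delta> (norm \<xi>)"
      and "ind \<equiv> indicator {x. norm x < \<epsilon>} \<xi>" and "r \<equiv> norm \<xi>"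
      and "Eb \<equiv> exp (- (1/2) * norm \<xi> powr (2*\<theta>) * t)"
  shows "((cmod (exp (lp * t) - exp (lm * t)))^2 / (cmod (lp - lm))^2 * r^(2*m) * (chi \<epsilon> \<xi>)^2
           \<le> 3 * (ind * (r powr (2 * real m + (-2*\<alpha>)) * Eb))) \<and>
    ((cmod (lp * exp (lp * t) - lm * exp (lm * t)))^2 / (cmod (lp - lm))^2 * r^(2*m) * (chi \<epsilon> \<xi>)^2
           \<le> 3 * (ind * (r powr (2 * real m + 0) * Eb))) \<and>
    ((cmod (lp * exp (lm * t) - lm * exp (lp * t)))^2 / (cmod (lp - lm))^2 * r^(2*m) * (chi \<epsilon> \<xi>)^2
           \<le> 3 * (ind * (r powr (2 * real m + 0) * Eb))) \<and>
    ((cmod (lp * (lm * exp (lm * t)) - lm * (lp * exp (lp * t))))^2 / (cmod (lp - lm))^2 * r^(2*m) * (chi \<epsilon> \<xi>)^2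
           \<le> 3 * (ind * (r powr (2 * real m + 2*\<alpha>) * Eb)))"
proof -
  have Eb0: "Eb \<ge> 0" unfolding Eb_def by simp
  have chi_eq: "chi \<epsilon> \<xi> = ind" unfolding chi_def ind_def by simp
  have rhs0: "0 \<le> 3 * (ind * (r powr k * Eb))" for k unfolding ind_def using Eb0 by simp
  consider (out) "\<not> r < \<epsilon>" | (zero) "r = 0" | (pos) "0 < r" "r < \<epsilon>"
    unfolding r_def by (metis norm_ge_zero order.not_eq_order_implies_strict)
  then show ?thesis
  proof cases
    case out
    then have "chi \<epsilon> \<xi> = 0" unfolding chi_eq ind_def r_def by simp
    then show ?thesis using rhs0 by simp
  next
    case zero
    have "lp - lm = 0" unfolding lp_def lm_def using zero assms(5) unfolding r_def
      by (simp add: lam_plus_def lam_minus_def pw_def)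
    then show ?thesis using rhs0 by simp
  next
    case pos
    have r1: "r < 1" using pos assms(6) by simp
    have chi1: "chi \<epsilon> \<xi> = 1" "ind = 1" using pos unfolding chi_eq ind_def r_def by simp_all
    define wv where "wv = pw r (2*\<delta>)"
    define A where "A = pw r (2*\<theta>)"
    define P where "P = pw r (2*(\<alpha> - 2*\<theta>))"
    define X where "X = 4 * P * (1 + wv) - 1"
    define a where "a = A / (2 * (1 + wv))"
    have wv: "0 \<le> wv" "wv \<le> 1" unfolding wv_def using pw_w[OF _ r1 assms(1)] pos by auto
    have P1: "P \<ge> 1" unfolding P_def using pw_P[OF pos(1) r1] assms(3) by simp
    have A: "A = r powr (2*\<theta>)" unfolding A_def using pos by (simp add: pw_pos)
    have Pp: "P = r powr (2*(\<alpha> - 2*\<theta>))" unfolding P_def using pos by (simp add: pw_pos)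
    have X3: "X \<ge> 3"
    proof -
      have "P * (1 + wv) \<ge> 1 * 1" using P1 wv by (intro mult_mono) auto
      then show ?thesis unfolding X_def by simp
    qed
    have a0: "a > 0" unfolding a_def A using pos wv by simp
    have lpf: "lp = complex_of_real a * (-1 + \<i> * complex_of_real (sqrt X))"
      and lmf: "lm = complex_of_real a * (-1 - \<i> * complex_of_real (sqrt X))"
      unfolding lp_def lm_def using lam_forms[of X "norm \<xi>" \<alpha> \<theta> \<delta> a] X3
      unfolding X_def P_def wv_def a_def A_def r_def by auto
    note C = core[OF a0 X3, of t, folded lpf lmf]
    define E2 where "E2 = exp (-2*a*t)"
    have E20: "E2 \<ge> 0" unfolding E2_def by simp
    have E2b: "E2 \<le> Eb"
    proof -
      have "a \<ge> A / 4" unfolding a_def using wv A pos by (intro divide_left_mono) auto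
      then have "-2*a*t \<le> - (1/2) * A * t" using assms(7) using mult_right_mono[of A "a*4" t] by (simp add: algebra_simps)
      then show ?thesis unfolding E2_def Eb_def A r_def by simp
    qed
    have AP: "A * A * P = r powr (2*\<alpha>)" unfolding A Pp by (simp add: powr_add[symmetric])
    have L: "a^2 * (1 + X) = r powr (2*\<alpha>) / (1 + wv)"
    proof -
      define u where "u = 1 + wv"
      have u0: "u \<noteq> 0" using wv unfolding u_def by simp
      have "a^2 * (1 + X) = (A / (2 * u))^2 * (4 * P * u)" unfolding a_def X_def u_def by simp
      also have "\<dots> = A * A * P / u" using u0 by (simp add: power2_eq_square field_simps)
      finally have "a^2 * (1 + X) = A * A * P / (1 + wv)" unfolding u_def .
      then show ?thesis using AP by simp
    qed
    have Lup: "a^2 * (1 + X) \<le> r powr (2*\<alpha>)" unfolding L using wv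
      by (simp add: divide_le_eq mult_le_cancel_left1)
    have aX: "a^2 * X \<ge> 3/8 * r powr (2*\<alpha>)"
    proof -
      have "a^2 * (3/4 * (1 + X)) \<le> a^2 * X" using X3 by (intro mult_left_mono) auto
      then have "a^2 * X \<ge> 3/4 * (a^2 * (1 + X))" by (simp add: algebra_simps)
      moreover have "r powr (2*\<alpha>) / (1 + wv) \<ge> r powr (2*\<alpha>) / 2" using wv
        by (intro divide_left_mono) auto
      then have "3/4 * (r powr (2*\<alpha>) / (1 + wv)) \<ge> 3/4 * (r powr (2*\<alpha>) / 2)" by (rule mult_left_mono) simp
      ultimately show ?thesis unfolding L by linarith
    qed
    have rpos: "r powr (2*\<alpha>) > 0" using pos by simp
    have Q1: "(cmod (exp (lp * t) - exp (lm * t)))^2 / (cmod (lp - lm))^2 \<le> 8/3 * (r powr (-2*\<alpha>) * E2)"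
    proof -
      have "E2 / (a^2 * X) \<le> E2 / (3/8 * r powr (2*\<alpha>))"
        using aX rpos E20 a0 X3 by (intro divide_left_mono) (auto intro!: mult_pos_pos)
      also have "\<dots> = 8/3 * (r powr (-2*\<alpha>) * E2)" using pos by (simp add: powr_minus_divide field_simps)
      finally show ?thesis using C(1) unfolding E2_def by linarith
    qed
    have Q4: "(cmod (lp * (lm * exp (lm * t)) - lm * (lp * exp (lp * t))))^2 / (cmod (lp - lm))^2 \<le> 4/3 * (r powr (2*\<alpha>) * E2)"
    proof -
      have "4/3 * (a^2 * (1 + X)) * E2 \<le> 4/3 * (r powr (2*\<alpha>) * E2)"
        using mult_right_mono[OF Lup E20] by (simp add: mult_ac)
      then show ?thesis using C(4) unfolding E2_def by linarith
    qed
    have r0p: "r powr 0 = 1" using pos by simp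
    have Q2: "(cmod (lp * exp (lp * t) - lm * exp (lm * t)))^2 / (cmod (lp - lm))^2 \<le> 4/3 * (r powr 0 * E2)"
      using C(2) unfolding E2_def r0p by simp
    have Q3: "(cmod (lp * exp (lm * t) - lm * exp (lp * t)))^2 / (cmod (lp - lm))^2 \<le> 4/3 * (r powr 0 * E2)"
      using C(3) unfolding E2_def r0p by simp
    have G1: "(cmod (exp (lp * t) - exp (lm * t)))^2 / (cmod (lp - lm))^2 * r^(2*m) * (chi \<epsilon> \<xi>)^2
           \<le> 3 * (ind * (r powr (2 * real m + (-2*\<alpha>)) * Eb))"
      using finish[OF Q1 _ _ E20 E2b pos(1), of m] unfolding chi1 by simp
    have G2: "(cmod (lp * exp (lp * t) - lm * exp (lm * t)))^2 / (cmod (lp - lm))^2 * r^(2*m) * (chi \<epsilon> \<xi>)^2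
           \<le> 3 * (ind * (r powr (2 * real m + 0) * Eb))"
      using finish[OF Q2 _ _ E20 E2b pos(1), of m] unfolding chi1 by simp
    have G3: "(cmod (lp * exp (lm * t) - lm * exp (lp * t)))^2 / (cmod (lp - lm))^2 * r^(2*m) * (chi \<epsilon> \<xi>)^2
           \<le> 3 * (ind * (r powr (2 * real m + 0) * Eb))"
      using finish[OF Q3 _ _ E20 E2b pos(1), of m] unfolding chi1 by simp
    have G4: "(cmod (lp * (lm * exp (lm * t)) - lm * (lp * exp (lp * t))))^2 / (cmod (lp - lm))^2 * r^(2*m) * (chi \<epsilon> \<xi>)^2
           \<le> 3 * (ind * (r powr (2 * real m + 2*\<alpha>) * Eb))"
      using finish[OF Q4 _ _ E20 E2b pos(1), of m] unfolding chi1 by simp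
    show ?thesis using G1 G2 G3 G4 by blast
  qed
qed



lemma pt_zero:
  fixes \<xi> :: "'a::real_normed_vector"
  assumes "\<delta> \<ge> 0" "\<epsilon> < 1" "t \<ge> 0"
  defines "lp \<equiv> lam_plus 0 0 \<delta> (norm \<xi>)" and "lm \<equiv> lam_minus 0 0 \<delta> (norm \<xi>)"
      and "ind \<equiv> indicator {x. norm x < \<epsilon>} \<xi>" and "r \<equiv> norm \<xi>"
  shows "((cmod (exp (lp * t) - exp (lm * t)))^2 / (cmod (lp - lm))^2 * r^(2*m) * (chi \<epsilon> \<xi>)^2
           \<le> 3 * (ind * exp (-t/2))) \<and>
    ((cmod (lp * exp (lp * t) - lm * exp (lm * t)))^2 / (cmod (lp - lm))^2 * r^(2*m) * (chi \<epsilon> \<xi>)^2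
           \<le> 3 * (ind * exp (-t/2))) \<and>
    ((cmod (lp * exp (lm * t) - lm * exp (lp * t)))^2 / (cmod (lp - lm))^2 * r^(2*m) * (chi \<epsilon> \<xi>)^2
           \<le> 3 * (ind * exp (-t/2))) \<and>
    ((cmod (lp * (lm * exp (lm * t)) - lm * (lp * exp (lp * t))))^2 / (cmod (lp - lm))^2 * r^(2*m) * (chi \<epsilon> \<xi>)^2
           \<le> 3 * (ind * exp (-t/2)))"
proof (cases "r < \<epsilon>")
  case False
  then have "chi \<epsilon> \<xi> = 0" "ind = 0" unfolding chi_def ind_def r_def by simp_all
  then show ?thesis by simp
next
  case True
  have r0: "0 \<le> r" unfolding r_def by simp
  have r1: "r < 1" using True assms(2) by simp
  have chi1: "chi \<epsilon> \<xi> = 1" "ind = 1" using True unfolding chi_def ind_def r_def by simp_all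
  have rm: "r^(2*m) \<le> 1" using r0 r1 by (simp add: power_le_one)
  define wv where "wv = pw r (2*\<delta>)"
  define X where "X = 4 * 1 * (1 + wv) - 1"
  define a where "a = 1 / (2 * (1 + wv))"
  have wv: "0 \<le> wv" "wv \<le> 1" unfolding wv_def using pw_w[OF r0 r1 assms(1)] by auto
  have X3: "X \<ge> 3" unfolding X_def using wv by simp
  have a0: "a > 0" unfolding a_def using wv by simp
  have lpf: "lp = complex_of_real a * (-1 + \<i> * complex_of_real (sqrt X))"
    and lmf: "lm = complex_of_real a * (-1 - \<i> * complex_of_real (sqrt X))"
    unfolding lp_def lm_def using lam_forms[of X "norm \<xi>" 0 0 \<delta> a] X3
    unfolding X_def wv_def a_def r_def by (auto simp: pw_def)
  note C = core[OF a0 X3, of t, folded lpf lmf]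
  define E2 where "E2 = exp (-2*a*t)"
  have E20: "E2 \<ge> 0" unfolding E2_def by simp
  have E2b: "E2 \<le> exp (-t/2)"
  proof -
    have "a \<ge> 1 / 4" unfolding a_def using wv by (intro divide_left_mono) auto
    then have "-2*a*t \<le> -t/2" using assms(3) mult_right_mono[of "1/4" a t] by (simp add: algebra_simps)
    then show ?thesis unfolding E2_def by simp
  qed
  have L: "a^2 * (1 + X) = 1 / (1 + wv)"
  proof -
    define u where "u = 1 + wv"
    have u0: "u \<noteq> 0" using wv unfolding u_def by simp
    have "a^2 * (1 + X) = (1 / (2 * u))^2 * (4 * u)" unfolding a_def X_def u_def by simp
    also have "\<dots> = 1 / u" using u0 by (simp add: power2_eq_square field_simps)
    finally show ?thesis unfolding u_def .
  qed
  have Lup: "a^2 * (1 + X) \<le> 1" unfolding L using wv by simp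
  have aX: "a^2 * X \<ge> 3/8"
  proof -
    have "a^2 * (3/4 * (1 + X)) \<le> a^2 * X" using X3 by (intro mult_left_mono) auto
    then have "a^2 * X \<ge> 3/4 * (a^2 * (1 + X))" by (simp add: algebra_simps)
    moreover have "1 / (1 + wv) \<ge> 1 / 2" using wv by (intro divide_left_mono) auto
    then have "3/4 * (1 / (1 + wv)) \<ge> 3/4 * (1 / 2)" by (rule mult_left_mono) simp
    ultimately show ?thesis unfolding L by linarith
  qed
  have Q1: "(cmod (exp (lp * t) - exp (lm * t)))^2 / (cmod (lp - lm))^2 \<le> 3 * E2"
  proof -
    have "E2 / (a^2 * X) \<le> E2 / (3/8)"
      using aX E20 by (intro divide_left_mono) auto
    also have "\<dots> \<le> 3 * E2" using E20 by simp
    finally show ?thesis using C(1) unfolding E2_def by linarith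
  qed
  have Q4: "(cmod (lp * (lm * exp (lm * t)) - lm * (lp * exp (lp * t))))^2 / (cmod (lp - lm))^2 \<le> 3 * E2"
  proof -
    have "4/3 * (a^2 * (1 + X)) * E2 \<le> 4/3 * (1 * E2)"
      using mult_right_mono[OF Lup E20] by (simp add: mult_ac)
    then show ?thesis using C(4) E20 unfolding E2_def by linarith
  qed
  have Q2: "(cmod (lp * exp (lp * t) - lm * exp (lm * t)))^2 / (cmod (lp - lm))^2 \<le> 3 * E2"
    using C(2) E20 unfolding E2_def by linarith
  have Q3: "(cmod (lp * exp (lm * t) - lm * exp (lp * t)))^2 / (cmod (lp - lm))^2 \<le> 3 * E2"
    using C(3) E20 unfolding E2_def by linarith
  have fin: "Q * r^(2*m) * (chi \<epsilon> \<xi>)^2 \<le> 3 * (ind * exp (-t/2))" if "Q \<le> 3 * E2" for Q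
  proof -
    have Q0: "Q * r^(2*m) \<le> (3 * E2) * 1"
    proof (cases "Q \<ge> 0")
      case True
      then show ?thesis using that rm r0 by (intro mult_mono) auto
    next
      case False
      then have "Q * r^(2*m) \<le> 0" using r0 by (simp add: mult_nonpos_nonneg)
      then show ?thesis using E20 by simp
    qed
    then show ?thesis unfolding chi1 using E2b by simp
  qed
  show ?thesis using fin[OF Q1] fin[OF Q2] fin[OF Q3] fin[OF Q4] by blast
qed

lemma zero_master:
  fixes F :: "real \<Rightarrow> real^'n::finite \<Rightarrow> real"
  assumes bnd: "\<And>t \<xi>. t \<ge> 0 \<Longrightarrow> F t \<xi> \<le> 3 * (indicator {x. norm x < \<epsilon>} \<xi> * exp (-t/2))"
  shows "\<exists>C. \<forall>t\<ge>0. sqrt (LINT \<xi>|lborel. F t \<xi>) \<le> C * exp (-t/4)"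
proof -
  define V where "V = measure lborel (ball (0::real^'n) \<epsilon>)"
  have V0: "V \<ge> 0" unfolding V_def by simp
  have Veq: "emeasure lborel (ball (0::real^'n) \<epsilon>) = ennreal V"
    unfolding V_def using emeasure_lborel_ball_finite[of "0::real^'n" \<epsilon>]
    by (simp add: emeasure_eq_ennreal_measure)
  have ballset: "{x::real^'n. norm x < \<epsilon>} = ball 0 \<epsilon>" by (auto simp: dist_norm)
  show ?thesis
  proof (intro exI[of _ "sqrt (3 * V)"] allI impI)
    fix t :: real assume t0: "t \<ge> 0"
    have "(\<integral>\<^sup>+(x::real^'n). ennreal (F t x) \<partial>lborel) \<le>
          (\<integral>\<^sup>+(x::real^'n). ennreal (3 * exp (-t/2)) * indicator (ball 0 \<epsilon>) x \<partial>lborel)"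
    proof (rule nn_integral_mono)
      fix x :: "real^'n"
      have "F t x \<le> 3 * exp (-t/2) * indicator (ball 0 \<epsilon>) x"
        using bnd[OF t0, of x] unfolding ballset by (simp add: mult_ac)
      moreover have eq: "ennreal (3 * exp (-t/2)) * indicator (ball 0 \<epsilon>) x = ennreal (3 * exp (-t/2) * indicator (ball 0 \<epsilon>) x)"
        by (simp add: indicator_def)
      ultimately show "ennreal (F t x) \<le> ennreal (3 * exp (-t/2)) * indicator (ball 0 \<epsilon>) x"
        unfolding eq by (intro ennreal_leI)
    qed
    also have "\<dots> = ennreal (3 * exp (-t/2)) * emeasure lborel (ball (0::real^'n) \<epsilon>)"
      by (simp add: nn_integral_cmult_indicator)
    also have "\<dots> = ennreal (3 * exp (-t/2) * V)" unfolding Veq using V0 by (simp add: ennreal_mult)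
    finally have "(LINT \<xi>|lborel. F t \<xi>) \<le> 3 * exp (-t/2) * V"
      by (intro integral_real_bounded) (use V0 in auto)
    then have "sqrt (LINT \<xi>|lborel. F t \<xi>) \<le> sqrt (3 * exp (-t/2) * V)" by simp
    also have "\<dots> = sqrt (3 * V) * sqrt (exp (-t/2))" by (simp add: real_sqrt_mult mult_ac)
    also have "sqrt (exp (-t/2)) = exp (-t/4)"
    proof -
      have "exp (-t/2) = (exp (-t/4))^2" by (simp add: power2_eq_square exp_add[symmetric])
      then show ?thesis by simp
    qed
    finally show "sqrt (LINT \<xi>|lborel. F t \<xi>) \<le> sqrt (3 * V) * exp (-t/4)" .
  qed
qed



lemma applyI:
  fixes G :: "real \<Rightarrow> real^'n::finite \<Rightarrow> real"
  assumes "p > - real CARD('n)" "\<theta> > 0" "\<epsilon> \<le> 1"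
  and "\<And>t \<xi>. t \<ge> 0 \<Longrightarrow> G t \<xi> \<le> 3 * (indicator {x. norm x < \<epsilon>} \<xi> * (norm \<xi> powr p * exp (- (1/2) * norm \<xi> powr (2*\<theta>) * t)))"
  and "\<And>t. Ival t = sqrt (LINT \<xi>|lborel. G t \<xi>)"
  and "e = -(1/\<theta>)*((real CARD('n) + p)/4)"
  shows "\<exists>C. \<forall>t\<ge>0. Ival t \<le> C * (1+t) powr e"
  using master[of p \<theta> \<epsilon> G, OF assms(1-4)] assms(5,6) by simp

lemma applyZ:
  fixes G :: "real \<Rightarrow> real^'n::finite \<Rightarrow> real"
  assumes "\<And>t \<xi>. t \<ge> 0 \<Longrightarrow> G t \<xi> \<le> 3 * (indicator {x. norm x < \<epsilon>} \<xi> * exp (-t/2))"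
  and "\<And>t. Ival t = sqrt (LINT \<xi>|lborel. G t \<xi>)"
  shows "\<exists>C. \<forall>t\<ge>0. Ival t \<le> C * exp (-t/4)"
  using zero_master[of G \<epsilon>, OF assms(1)] assms(2) by simp

theorem lemma2p6:
  fixes \<gamma> :: "'n::finite \<Rightarrow> nat"
    and \<delta> \<alpha> \<theta> \<epsilon> :: real
  assumes "\<delta> \<ge> 0" and "\<alpha> \<ge> 0" and "\<alpha> / 2 \<le> \<theta>" and "\<theta> \<le> \<alpha>"
    and "0 < \<epsilon>" and "\<epsilon> < 1"
  defines "n \<equiv> real CARD('n)" and "g \<equiv> real (mi_len \<gamma>)"
  shows "(\<theta> > 0 \<longrightarrow>
           ((n + 2 * g > 2 * \<alpha> \<longrightarrow>
              (\<exists>C. \<forall>t\<ge>0. I1 \<alpha> \<theta> \<delta> \<epsilon> \<gamma> 0 t \<le> C * (1 + t) powr (-(1/\<theta>) * (n/4 + g/2 - \<alpha>/2)))) \<and>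
            (\<exists>C. \<forall>t\<ge>0. I1 \<alpha> \<theta> \<delta> \<epsilon> \<gamma> 1 t \<le> C * (1 + t) powr (-(1/\<theta>) * (n/4 + g/2))) \<and>
            (\<exists>C. \<forall>t\<ge>0. I0 \<alpha> \<theta> \<delta> \<epsilon> \<gamma> 0 t \<le> C * (1 + t) powr (-(1/\<theta>) * (n/4 + g/2))) \<and>
            (\<exists>C. \<forall>t\<ge>0. I0 \<alpha> \<theta> \<delta> \<epsilon> \<gamma> 1 t \<le> C * (1 + t) powr (-(1/\<theta>) * (n/4 + g/2 + \<alpha>/2)))))
       \<and> (\<alpha> = 0 \<and> \<theta> = 0 \<longrightarrow>
           (\<exists>C. \<forall>t\<ge>0. \<forall>j\<in>{0,1}.
              I0 \<alpha> \<theta> \<delta> \<epsilon> \<gamma> j t \<le> C * exp (-t/4) \<and> I1 \<alpha> \<theta> \<delta> \<epsilon> \<gamma> j t \<le> C * exp (-t/4)))"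
proof -
  have e1: "\<epsilon> \<le> 1" using assms(6) by simp
  have n1: "n \<ge> 1" unfolding n_def by simp
  have g0: "g \<ge> 0" unfolding g_def by simp
  define F1 where "F1 j = (\<lambda>t (\<xi>::real^'n). let lp = lam_plus \<alpha> \<theta> \<delta> (norm \<xi>); lm = lam_minus \<alpha> \<theta> \<delta> (norm \<xi>) in
          (cmod ((deriv ^^ j) (\<lambda>s::complex. exp (lp * s) - exp (lm * s)) (complex_of_real t)))\<^sup>2
          / (cmod (lp - lm))\<^sup>2 * norm \<xi> ^ (2 * mi_len \<gamma>) * (chi \<epsilon> \<xi>)\<^sup>2)" for j
  define F0 where "F0 j = (\<lambda>t (\<xi>::real^'n). let lp = lam_plus \<alpha> \<theta> \<delta> (norm \<xi>); lm = lam_minus \<alpha> \<theta> \<delta> (norm \<xi>) in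
          (cmod ((deriv ^^ j) (\<lambda>s::complex. lp * exp (lm * s) - lm * exp (lp * s)) (complex_of_real t)))\<^sup>2
          / (cmod (lp - lm))\<^sup>2 * norm \<xi> ^ (2 * mi_len \<gamma>) * (chi \<epsilon> \<xi>)\<^sup>2)" for j
  have I1e: "I1 \<alpha> \<theta> \<delta> \<epsilon> \<gamma> j t = sqrt (LINT \<xi>|lborel. F1 j t \<xi>)" for j t
    unfolding I1_def I1sq_def F1_def ..
  have I0e: "I0 \<alpha> \<theta> \<delta> \<epsilon> \<gamma> j t = sqrt (LINT \<xi>|lborel. F0 j t \<xi>)" for j t
    unfolding I0_def I0sq_def F0_def ..
  have P1: "\<theta> > 0 \<longrightarrow> ((n + 2 * g > 2 * \<alpha> \<longrightarrow>
              (\<exists>C. \<forall>t\<ge>0. I1 \<alpha> \<theta> \<delta> \<epsilon> \<gamma> 0 t \<le> C * (1 + t) powr (-(1/\<theta>) * (n/4 + g/2 - \<alpha>/2)))) \<and>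
            (\<exists>C. \<forall>t\<ge>0. I1 \<alpha> \<theta> \<delta> \<epsilon> \<gamma> 1 t \<le> C * (1 + t) powr (-(1/\<theta>) * (n/4 + g/2))) \<and>
            (\<exists>C. \<forall>t\<ge>0. I0 \<alpha> \<theta> \<delta> \<epsilon> \<gamma> 0 t \<le> C * (1 + t) powr (-(1/\<theta>) * (n/4 + g/2))) \<and>
            (\<exists>C. \<forall>t\<ge>0. I0 \<alpha> \<theta> \<delta> \<epsilon> \<gamma> 1 t \<le> C * (1 + t) powr (-(1/\<theta>) * (n/4 + g/2 + \<alpha>/2))))"
  proof (intro impI conjI)
    assume th: "\<theta> > 0"
    note PT = pt_pos[OF assms(1-4) th assms(6)]
    show "\<exists>C. \<forall>t\<ge>0. I1 \<alpha> \<theta> \<delta> \<epsilon> \<gamma> 0 t \<le> C * (1 + t) powr (-(1/\<theta>) * (n/4 + g/2 - \<alpha>/2))"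
      if h: "n + 2 * g > 2 * \<alpha>"
    proof (rule applyI[where p = "2 * real (mi_len \<gamma>) + (-2*\<alpha>)" and G = "F1 0", OF _ th e1])
      show "2 * real (mi_len \<gamma>) + (-2*\<alpha>) > - real CARD('n)" using h unfolding n_def g_def by simp
      show "-(1/\<theta>) * (n/4 + g/2 - \<alpha>/2) = -(1/\<theta>) * ((real CARD('n) + (2 * real (mi_len \<gamma>) + (-2*\<alpha>)))/4)"
        unfolding n_def g_def using th by (simp add: field_simps)
      show "I1 \<alpha> \<theta> \<delta> \<epsilon> \<gamma> 0 t = sqrt (LINT \<xi>|lborel. F1 0 t \<xi>)" for t
        by (rule I1e)
      fix t :: real and \<xi> :: "real^'n" assume t0: "t \<ge> 0"
      show "F1 0 t \<xi> \<le> 3 * (indicator {x. norm x < \<epsilon>} \<xi> * (norm \<xi> powr (2 * real (mi_len \<gamma>) + (-2*\<alpha>)) * exp (- (1/2) * norm \<xi> powr (2*\<theta>) * t)))"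
        using PT[OF t0, of \<xi> "mi_len \<gamma>"] unfolding F1_def by (simp add: Let_def)
    qed
    show "\<exists>C. \<forall>t\<ge>0. I1 \<alpha> \<theta> \<delta> \<epsilon> \<gamma> 1 t \<le> C * (1 + t) powr (-(1/\<theta>) * (n/4 + g/2))"
    proof (rule applyI[where p = "2 * real (mi_len \<gamma>) + 0" and G = "F1 1", OF _ th e1])
      show "2 * real (mi_len \<gamma>) + 0 > - real CARD('n)" by (smt (verit) of_nat_0_le_iff of_nat_0_less_iff zero_less_card_finite)
      show "-(1/\<theta>) * (n/4 + g/2) = -(1/\<theta>) * ((real CARD('n) + (2 * real (mi_len \<gamma>) + 0))/4)"
        unfolding n_def g_def using th by (simp add: field_simps)
      show "I1 \<alpha> \<theta> \<delta> \<epsilon> \<gamma> 1 t = sqrt (LINT \<xi>|lborel. F1 1 t \<xi>)" for t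
        by (rule I1e)
      fix t :: real and \<xi> :: "real^'n" assume t0: "t \<ge> 0"
      show "F1 1 t \<xi> \<le> 3 * (indicator {x. norm x < \<epsilon>} \<xi> * (norm \<xi> powr (2 * real (mi_len \<gamma>) + 0) * exp (- (1/2) * norm \<xi> powr (2*\<theta>) * t)))"
        using PT[OF t0, of \<xi> "mi_len \<gamma>"] unfolding F1_def Let_def deriv1_I1 by simp
    qed
    show "\<exists>C. \<forall>t\<ge>0. I0 \<alpha> \<theta> \<delta> \<epsilon> \<gamma> 0 t \<le> C * (1 + t) powr (-(1/\<theta>) * (n/4 + g/2))"
    proof (rule applyI[where p = "2 * real (mi_len \<gamma>) + 0" and G = "F0 0", OF _ th e1])
      show "2 * real (mi_len \<gamma>) + 0 > - real CARD('n)" by (smt (verit) of_nat_0_le_iff of_nat_0_less_iff zero_less_card_finite)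
      show "-(1/\<theta>) * (n/4 + g/2) = -(1/\<theta>) * ((real CARD('n) + (2 * real (mi_len \<gamma>) + 0))/4)"
        unfolding n_def g_def using th by (simp add: field_simps)
      show "I0 \<alpha> \<theta> \<delta> \<epsilon> \<gamma> 0 t = sqrt (LINT \<xi>|lborel. F0 0 t \<xi>)" for t
        by (rule I0e)
      fix t :: real and \<xi> :: "real^'n" assume t0: "t \<ge> 0"
      show "F0 0 t \<xi> \<le> 3 * (indicator {x. norm x < \<epsilon>} \<xi> * (norm \<xi> powr (2 * real (mi_len \<gamma>) + 0) * exp (- (1/2) * norm \<xi> powr (2*\<theta>) * t)))"
        using PT[OF t0, of \<xi> "mi_len \<gamma>"] unfolding F0_def Let_def by simp
    qed
    show "\<exists>C. \<forall>t\<ge>0. I0 \<alpha> \<theta> \<delta> \<epsilon> \<gamma> 1 t \<le> C * (1 + t) powr (-(1/\<theta>) * (n/4 + g/2 + \<alpha>/2))"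
    proof (rule applyI[where p = "2 * real (mi_len \<gamma>) + 2*\<alpha>" and G = "F0 1", OF _ th e1])
      show "2 * real (mi_len \<gamma>) + 2*\<alpha> > - real CARD('n)" using assms(2)
        by (smt (verit) of_nat_0_le_iff of_nat_0_less_iff zero_less_card_finite)
      show "-(1/\<theta>) * (n/4 + g/2 + \<alpha>/2) = -(1/\<theta>) * ((real CARD('n) + (2 * real (mi_len \<gamma>) + 2*\<alpha>))/4)"
        unfolding n_def g_def using th by (simp add: field_simps)
      show "I0 \<alpha> \<theta> \<delta> \<epsilon> \<gamma> 1 t = sqrt (LINT \<xi>|lborel. F0 1 t \<xi>)" for t
        by (rule I0e)
      fix t :: real and \<xi> :: "real^'n" assume t0: "t \<ge> 0"
      show "F0 1 t \<xi> \<le> 3 * (indicator {x. norm x < \<epsilon>} \<xi> * (norm \<xi> powr (2 * real (mi_len \<gamma>) + 2*\<alpha>) * exp (- (1/2) * norm \<xi> powr (2*\<theta>) * t)))"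
        using PT[OF t0, of \<xi> "mi_len \<gamma>"] unfolding F0_def Let_def deriv1_I0 by simp
    qed
  qed
  have P2: "\<alpha> = 0 \<and> \<theta> = 0 \<longrightarrow>
           (\<exists>C. \<forall>t\<ge>0. \<forall>j\<in>{0,1}.
              I0 \<alpha> \<theta> \<delta> \<epsilon> \<gamma> j t \<le> C * exp (-t/4) \<and> I1 \<alpha> \<theta> \<delta> \<epsilon> \<gamma> j t \<le> C * exp (-t/4))"
  proof
    assume z: "\<alpha> = 0 \<and> \<theta> = 0"
    note PZ = pt_zero[OF assms(1) assms(6)]
    have "\<exists>C. \<forall>t\<ge>0. I1 \<alpha> \<theta> \<delta> \<epsilon> \<gamma> 0 t \<le> C * exp (-t/4)"
    proof (rule applyZ[where G = "F1 0"])
      show "I1 \<alpha> \<theta> \<delta> \<epsilon> \<gamma> 0 t = sqrt (LINT \<xi>|lborel. F1 0 t \<xi>)" for t by (rule I1e)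
      fix t :: real and \<xi> :: "real^'n" assume t0: "t \<ge> 0"
      show "F1 0 t \<xi> \<le> 3 * (indicator {x. norm x < \<epsilon>} \<xi> * exp (-t/2))"
        using PZ[OF t0, of \<xi> "mi_len \<gamma>"] z unfolding F1_def Let_def by simp
    qed
    then obtain C1 where C1: "\<forall>t\<ge>0. I1 \<alpha> \<theta> \<delta> \<epsilon> \<gamma> 0 t \<le> C1 * exp (-t/4)" by blast
    have "\<exists>C. \<forall>t\<ge>0. I1 \<alpha> \<theta> \<delta> \<epsilon> \<gamma> 1 t \<le> C * exp (-t/4)"
    proof (rule applyZ[where G = "F1 1"])
      show "I1 \<alpha> \<theta> \<delta> \<epsilon> \<gamma> 1 t = sqrt (LINT \<xi>|lborel. F1 1 t \<xi>)" for t by (rule I1e)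
      fix t :: real and \<xi> :: "real^'n" assume t0: "t \<ge> 0"
      show "F1 1 t \<xi> \<le> 3 * (indicator {x. norm x < \<epsilon>} \<xi> * exp (-t/2))"
        using PZ[OF t0, of \<xi> "mi_len \<gamma>"] z unfolding F1_def Let_def deriv1_I1 by simp
    qed
    then obtain C2 where C2: "\<forall>t\<ge>0. I1 \<alpha> \<theta> \<delta> \<epsilon> \<gamma> 1 t \<le> C2 * exp (-t/4)" by blast
    have "\<exists>C. \<forall>t\<ge>0. I0 \<alpha> \<theta> \<delta> \<epsilon> \<gamma> 0 t \<le> C * exp (-t/4)"
    proof (rule applyZ[where G = "F0 0"])
      show "I0 \<alpha> \<theta> \<delta> \<epsilon> \<gamma> 0 t = sqrt (LINT \<xi>|lborel. F0 0 t \<xi>)" for t by (rule I0e)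
      fix t :: real and \<xi> :: "real^'n" assume t0: "t \<ge> 0"
      show "F0 0 t \<xi> \<le> 3 * (indicator {x. norm x < \<epsilon>} \<xi> * exp (-t/2))"
        using PZ[OF t0, of \<xi> "mi_len \<gamma>"] z unfolding F0_def Let_def by simp
    qed
    then obtain C3 where C3: "\<forall>t\<ge>0. I0 \<alpha> \<theta> \<delta> \<epsilon> \<gamma> 0 t \<le> C3 * exp (-t/4)" by blast
    have "\<exists>C. \<forall>t\<ge>0. I0 \<alpha> \<theta> \<delta> \<epsilon> \<gamma> 1 t \<le> C * exp (-t/4)"
    proof (rule applyZ[where G = "F0 1"])
      show "I0 \<alpha> \<theta> \<delta> \<epsilon> \<gamma> 1 t = sqrt (LINT \<xi>|lborel. F0 1 t \<xi>)" for t by (rule I0e)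
      fix t :: real and \<xi> :: "real^'n" assume t0: "t \<ge> 0"
      show "F0 1 t \<xi> \<le> 3 * (indicator {x. norm x < \<epsilon>} \<xi> * exp (-t/2))"
        using PZ[OF t0, of \<xi> "mi_len \<gamma>"] z unfolding F0_def Let_def deriv1_I0 by simp
    qed
    then obtain C4 where C4: "\<forall>t\<ge>0. I0 \<alpha> \<theta> \<delta> \<epsilon> \<gamma> 1 t \<le> C4 * exp (-t/4)" by blast
    define C where "C = max (max C1 C2) (max C3 C4)"
    have mono: "X \<le> Ci * exp (-t/4) \<Longrightarrow> Ci \<le> C \<Longrightarrow> X \<le> C * exp (-t/4)" for X Ci t
      by (meson exp_gt_zero less_imp_le mult_right_mono order_trans)
    show "\<exists>C. \<forall>t\<ge>0. \<forall>j\<in>{0,1}.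
              I0 \<alpha> \<theta> \<delta> \<epsilon> \<gamma> j t \<le> C * exp (-t/4) \<and> I1 \<alpha> \<theta> \<delta> \<epsilon> \<gamma> j t \<le> C * exp (-t/4)"
    proof (intro exI[of _ C] allI impI ballI)
      fix t :: real and j :: nat assume t0: "t \<ge> 0" and j: "j \<in> {0,1}"
      have c: "C1 \<le> C" "C2 \<le> C" "C3 \<le> C" "C4 \<le> C" unfolding C_def by auto
      show "I0 \<alpha> \<theta> \<delta> \<epsilon> \<gamma> j t \<le> C * exp (-t/4) \<and> I1 \<alpha> \<theta> \<delta> \<epsilon> \<gamma> j t \<le> C * exp (-t/4)"
        using j mono[OF C1[rule_format, OF t0] c(1)] mono[OF C2[rule_format, OF t0] c(2)]
          mono[OF C3[rule_format, OF t0] c(3)] mono[OF C4[rule_format, OF t0] c(4)] by auto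
    qed
  qed
  show ?thesis using P1 P2 by blast
qed



end
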